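(* Let $E$ be a real Banach space, let $x,y\in E$ be linearly independent, let $[m,M]=\{\alpha\in\mathbb{R}:x+\alpha y\perp y\}$, and for $\alpha\in D(x,y)\setminus[m,M]$ let $f(\alpha)$ be the unique real number with $x+\alpha y\perp x-f(\alpha)y$ (so $f$ is defined almost everywhere on $\mathbb{R}\setminus[m,M]$, and $t+f(t)\neq0$ wherever $f(t)$ is defined). Then for every $\alpha>M$, $$\|x+\alpha y\|=\|x+My\|\exp\Big(\int_M^\alpha \frac{dt}{t+f(t)}\Big),$$ and for every $\alpha<m$, $$\|x+\alpha y\|=\|x+my\|\exp\Big(-\int_\alpha^m \frac{dt}{t+f(t)}\Big),$$ where the integrals are Lebesgue integrals.
   Context: For $u,v\in E$, $u\perp v$ means $\|u+\beta v\|\ge\|u\|$ for every $\beta\in\mathbb{R}$ (Birkhoff–James orthogonality). For linearly independent $x,y\in E$, $D(x,y)$ denotes the set of $\alpha\in\mathbb{R}$ at which the convex function $\phi(\alpha)=\|x+\alpha y\|$ is differentiable; its complement has Lebesgue measure zero. The set $\{\alpha: x+\alpha y\perp y\}$ is a closed bounded interval $[m,M]$, and for $\alpha\in D(x,y)\setminus[m,M]$ there is a unique $f(\alpha)\in\mathbb{R}$ with $x+\alpha y\perp x-f(\alpha)y$. *)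

theory Defs
  imports "HOL-Analysis.Analysis"
begin

definition bj_orth :: "'a::real_normed_vector \<Rightarrow> 'a \<Rightarrow> bool" where
  "bj_orth u v \<longleftrightarrow> (\<forall>\<beta>::real. norm (u + \<beta> *\<^sub>R v) \<ge> norm u)"

definition Dset :: "'a::real_normed_vector \<Rightarrow> 'a \<Rightarrow> real set" where
  "Dset x y = {\<alpha>. (\<lambda>a::real. norm (x + a *\<^sub>R y)) differentiable (at \<alpha>)}"

text \<open>f(alpha): the unique real beta with x + alpha y BJ-orthogonal to x - beta y
  (meaningful for alpha in D(x,y) outside [m,M]; elsewhere an unspecified value).\<close>
definition fBJ :: "'a::real_normed_vector \<Rightarrow> 'a \<Rightarrow> real \<Rightarrow> real" where
  "fBJ x y \<alpha> = (THE \<beta>::real. bj_orth (x + \<alpha> *\<^sub>R y) (x - \<beta> *\<^sub>R y))"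

end

theory Submission
  imports Defs
begin


lemma deriv_seq:
  fixes f :: "real \<Rightarrow> real"
  assumes "(f has_real_derivative d) (at x)"
  shows "(\<lambda>n. (f (x + inverse (real (Suc n))) - f x) / inverse (real (Suc n))) \<longlonglongrightarrow> d"
proof -
  have L: "((\<lambda>h. (f (x + h) - f x) / h) \<longlongrightarrow> d) (at 0)"
    using assms by (simp add: DERIV_def)
  have H: "filterlim (\<lambda>n. inverse (real (Suc n))) (at 0) sequentially"
    unfolding filterlim_at using LIMSEQ_inverse_real_of_nat by auto
  show ?thesis using filterlim_compose[OF L H] by simp
qed



lemma ftc_ae:
  fixes \<psi> g :: "real \<Rightarrow> real"
  assumes ab: "a \<le> b" and N: "countable N"
    and cont: "continuous_on UNIV \<psi>"
    and lip: "\<And>s t. s \<in> {a..b+1} \<Longrightarrow> t \<in> {a..b+1} \<Longrightarrow> \<bar>\<psi> s - \<psi> t\<bar> \<le> L * \<bar>s - t\<bar>"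
    and der: "\<And>t. t \<in> {a<..<b} - N \<Longrightarrow> (\<psi> has_real_derivative g t) (at t)"
  shows "set_integrable lborel {a..b} g \<and> (LINT t:{a..b}|lborel. g t) = \<psi> b - \<psi> a"
proof -
  define h where "h n = inverse (real (Suc n))" for n
  define D where "D n t = (\<psi> (t + h n) - \<psi> t) / h n" for n t
  define s where "s n t = indicator {a..b} t *\<^sub>R D n t" for n t
  define f where "f t = indicator {a..b} t *\<^sub>R g t" for t
  define X where "X = N \<union> {a,b}"
  have X: "countable X" using N by (simp add: X_def)
  have hpos: "0 < h n" "h n \<le> 1" for n by (auto simp: h_def field_simps)
  have contD: "continuous_on UNIV (D n)" for n
    unfolding D_def using hpos(1)[of n]
    by (intro continuous_intros continuous_on_compose2[OF cont]) auto
  have measD: "D n \<in> borel_measurable borel" for n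
    using contD by (rule borel_measurable_continuous_onI)
  have meas_s: "s n \<in> borel_measurable lborel" for n
    unfolding s_def using measD[of n] by measurable
  have lim: "(\<lambda>n. s n t) \<longlonglongrightarrow> f t" if "t \<notin> X" for t
  proof (cases "t \<in> {a..b}")
    case True
    then have "t \<in> {a<..<b} - N" using that by (auto simp: X_def)
    from deriv_seq[OF der[OF this]] have "(\<lambda>n. D n t) \<longlonglongrightarrow> g t"
      by (simp add: D_def h_def)
    then show ?thesis using True by (simp add: s_def f_def)
  next
    case False
    then show ?thesis by (simp add: s_def f_def)
  qed
  have AE: "AE t in lborel. (\<lambda>n. s n t) \<longlonglongrightarrow> f t"
    by (rule AE_I'[OF countable_imp_null_set_lborel[OF X]]) (use lim in auto)
  have bound: "norm (s n t) \<le> indicator {a..b} t *\<^sub>R L" for n t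
  proof (cases "t \<in> {a..b}")
    case True
    have "\<bar>\<psi> (t + h n) - \<psi> t\<bar> \<le> L * \<bar>(t + h n) - t\<bar>"
      using True hpos[of n] by (intro lip) auto
    then have "\<bar>\<psi> (t + h n) - \<psi> t\<bar> \<le> L * h n" using hpos[of n] by simp
    then have "\<bar>D n t\<bar> \<le> L" using hpos[of n] by (simp add: D_def abs_divide divide_le_eq)
    then show ?thesis using True by (simp add: s_def)
  next
    case False
    then show ?thesis by (simp add: s_def)
  qed
  have intw: "integrable lborel (\<lambda>t. indicator {a..b} t *\<^sub>R L)"
    by (rule borel_integrable_compact) auto
  have measf: "f \<in> borel_measurable lborel"
  proof (rule measurable_restrict_countable[OF X])
    show "f \<in> borel_measurable (restrict_space lborel (- X))"
    proof (rule borel_measurable_LIMSEQ_real[where u = s])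
      show "(\<lambda>n. s n t) \<longlonglongrightarrow> f t" if "t \<in> space (restrict_space lborel (- X))" for t
        using that lim by (auto simp: space_restrict_space)
      show "s n \<in> borel_measurable (restrict_space lborel (- X))" for n
        using meas_s[of n] by (rule measurable_restrict_space1)
    qed
  qed auto
  have intf: "integrable lborel f"
    by (rule integrable_dominated_convergence[OF measf meas_s intw AE]) (use bound in auto)
  have limI: "(\<lambda>n. integral\<^sup>L lborel (s n)) \<longlonglongrightarrow> integral\<^sup>L lborel f"
    by (rule integral_dominated_convergence[OF measf meas_s intw AE]) (use bound in auto)
  define \<Psi> where "\<Psi> u = integral {a-1..u} \<psi>" for u
  have dPsi: "(\<Psi> has_real_derivative \<psi> u) (at u)" if "u \<in> {a-1<..<b+2}" for u
  proof -
    have "(\<Psi> has_real_derivative \<psi> u) (at u within {a-1..b+2})"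
      unfolding \<Psi>_def using that
      by (intro integral_has_real_derivative continuous_on_subset[OF cont]) auto
    moreover have "at u within {a-1..b+2} = at u" using that by (intro at_within_interior) simp
    ultimately show ?thesis by metis
  qed
  have ftc: "((\<lambda>t. \<psi> (t + c)) has_integral (\<Psi> (b + c) - \<Psi> (a + c))) {a..b}"
    if "0 \<le> c" "c \<le> 1" for c
  proof (rule fundamental_theorem_of_calculus[OF ab])
    fix t assume t: "t \<in> {a..b}"
    have "(\<Psi> has_real_derivative \<psi> (t + c)) (at (t + c))"
      using t that by (intro dPsi) auto
    moreover have "((\<lambda>t. t + c) has_real_derivative 1) (at t)"
      by (auto intro!: derivative_eq_intros)
    ultimately have "((\<lambda>t. \<Psi> (t + c)) has_real_derivative \<psi> (t + c)) (at t)"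
      using DERIV_chain2 by fastforce
    then show "((\<lambda>t. \<Psi> (t + c)) has_vector_derivative \<psi> (t + c)) (at t within {a..b})"
      by (simp add: has_real_derivative_iff_has_vector_derivative has_vector_derivative_at_within)
  qed
  have intD: "(D n has_integral ((\<Psi> (b + h n) - \<Psi> b) / h n - (\<Psi> (a + h n) - \<Psi> a) / h n)) {a..b}" for n
  proof -
    have "((\<lambda>t. \<psi> (t + h n) - \<psi> (t + 0)) has_integral
        ((\<Psi> (b + h n) - \<Psi> (a + h n)) - (\<Psi> (b + 0) - \<Psi> (a + 0)))) {a..b}"
      using hpos[of n] by (intro has_integral_diff ftc) auto
    from has_integral_divide[OF this, of "h n"]
    have H: "((\<lambda>t. (\<psi> (t + h n) - \<psi> (t + 0)) / h n) has_integral
        (((\<Psi> (b + h n) - \<Psi> (a + h n)) - (\<Psi> (b + 0) - \<Psi> (a + 0))) / h n)) {a..b}" .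
    have E: "(((\<Psi> (b + h n) - \<Psi> (a + h n)) - (\<Psi> (b + 0) - \<Psi> (a + 0))) / h n)
        = ((\<Psi> (b + h n) - \<Psi> b) / h n - (\<Psi> (a + h n) - \<Psi> a) / h n)"
      by (simp add: diff_divide_distrib)
    have F: "D n = (\<lambda>t. (\<psi> (t + h n) - \<psi> (t + 0)) / h n)"
      by (simp add: D_def fun_eq_iff)
    show ?thesis using H unfolding E F .
  qed
  have eqI: "integral\<^sup>L lborel (s n) = (\<Psi> (b + h n) - \<Psi> b) / h n - (\<Psi> (a + h n) - \<Psi> a) / h n" for n
  proof -
    have si: "set_integrable lborel {a..b} (D n)"
      unfolding set_integrable_def
      by (rule borel_integrable_compact) (auto intro: continuous_on_subset[OF contD])
    have "integral\<^sup>L lborel (s n) = (LINT t:{a..b}|lborel. D n t)"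
      by (simp add: s_def[abs_def] set_lebesgue_integral_def)
    also have "\<dots> = integral {a..b} (D n)" by (rule set_borel_integral_eq_integral(2)[OF si])
    also have "\<dots> = (\<Psi> (b + h n) - \<Psi> b) / h n - (\<Psi> (a + h n) - \<Psi> a) / h n"
      using intD[of n] by (rule integral_unique)
    finally show ?thesis .
  qed
  have "(\<lambda>n. (\<Psi> (b + h n) - \<Psi> b) / h n - (\<Psi> (a + h n) - \<Psi> a) / h n) \<longlonglongrightarrow> \<psi> b - \<psi> a"
    unfolding h_def using ab
    by (intro tendsto_diff deriv_seq dPsi) auto
  then have "(\<lambda>n. integral\<^sup>L lborel (s n)) \<longlonglongrightarrow> \<psi> b - \<psi> a" by (simp add: eqI)
  with limI have "integral\<^sup>L lborel f = \<psi> b - \<psi> a" by (rule LIMSEQ_unique)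
  then show ?thesis using intf
    by (simp add: set_integrable_def set_lebesgue_integral_def f_def[abs_def])
qed



lemma convex_norm_line:
  fixes p q :: "'a::real_normed_vector"
  shows "convex_on UNIV (\<lambda>t::real. norm (p + t *\<^sub>R q))"
proof (rule convex_onI)
  fix s a c :: real assume s: "0 < s" "s < 1"
  have "p + ((1 - s) *\<^sub>R a + s *\<^sub>R c) *\<^sub>R q = (1 - s) *\<^sub>R (p + a *\<^sub>R q) + s *\<^sub>R (p + c *\<^sub>R q)"
    by (simp add: algebra_simps)
  also have "norm \<dots> \<le> norm ((1 - s) *\<^sub>R (p + a *\<^sub>R q)) + norm (s *\<^sub>R (p + c *\<^sub>R q))"
    by (rule norm_triangle_ineq)
  also have "\<dots> = (1 - s) * norm (p + a *\<^sub>R q) + s * norm (p + c *\<^sub>R q)"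
    using s by (simp only: norm_scaleR abs_of_nonneg less_imp_le diff_ge_0_iff_ge)
  finally show "norm (p + ((1 - s) *\<^sub>R a + s *\<^sub>R c) *\<^sub>R q) \<le> (1 - s) * norm (p + a *\<^sub>R q) + s * norm (p + c *\<^sub>R q)" .
qed auto

lemma convex_diff_ae:
  fixes \<phi> :: "real \<Rightarrow> real"
  assumes cv: "convex_on UNIV \<phi>"
  obtains N \<rho> where "countable N" "\<And>t. t \<notin> N \<Longrightarrow> (\<phi> has_real_derivative \<rho> t) (at t)"
proof -
  define sl where "sl a b = (\<phi> b - \<phi> a) / (b - a)" for a b
  have chord: "sl a b \<le> sl b c" if "a < b" "b < c" for a b c
  proof -
    have "(\<phi> a - \<phi> b) / (a - b) \<le> (\<phi> a - \<phi> c) / (a - c)"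
         "(\<phi> a - \<phi> c) / (a - c) \<le> (\<phi> b - \<phi> c) / (b - c)"
      using convex_on_slope_le(1)[OF cv UNIV_I UNIV_I that] convex_on_slope_le(2)[OF cv UNIV_I UNIV_I that]
      by blast+
    moreover have "(\<phi> a - \<phi> b) / (a - b) = sl a b" "(\<phi> b - \<phi> c) / (b - c) = sl b c"
      unfolding sl_def by (metis minus_diff_eq minus_divide_divide)+
    ultimately show ?thesis by linarith
  qed
  define \<rho> where "\<rho> t = Inf ((\<lambda>h. sl t (t + h)) ` {0<..})" for t
  have bdd: "bdd_below ((\<lambda>h. sl t (t + h)) ` {0<..})" for t
    by (rule bdd_belowI2[of _ "sl (t - 1) t"]) (auto intro: chord)
  have i: "\<rho> t \<le> sl t (t + h)" if "h > 0" for t h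
    unfolding \<rho>_def using that by (intro cInf_lower bdd) auto
  have ii: "sl (t - k) t \<le> \<rho> t" if "k > 0" for t k
    unfolding \<rho>_def using that by (intro cInf_greatest) (auto intro: chord)
  have mono: "mono \<rho>"
  proof (rule monoI)
    fix t s :: real assume "t \<le> s"
    show "\<rho> t \<le> \<rho> s"
    proof (cases "t = s")
      case False
      with \<open>t \<le> s\<close> have ts: "t < s" by simp
      have "\<rho> t \<le> sl t (t + (s - t))" using ts by (intro i) auto
      also have "\<dots> = sl (s - (s - t)) s" by simp
      also have "\<dots> \<le> \<rho> s" using ts by (intro ii) auto
      finally show ?thesis .
    qed simp
  qed
  define N where "N = {t. \<not> isCont \<rho> t}"
  have "countable N"
    using mono_ctble_discont[OF mono] by (simp add: N_def)
  moreover have "(\<phi> has_real_derivative \<rho> t) (at t)" if "t \<notin> N" for t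
  proof -
    from that have c: "isCont \<rho> t" by (simp add: N_def)
    show ?thesis unfolding DERIV_def
    proof (rule LIM_I)
      fix r :: real assume r: "r > 0"
      from c r obtain d where d: "d > 0" "\<And>y. \<bar>y - t\<bar> < d \<Longrightarrow> \<bar>\<rho> y - \<rho> t\<bar> < r"
        unfolding continuous_at_eps_delta dist_real_def by blast
      show "\<exists>s>0. \<forall>h. h \<noteq> 0 \<and> norm (h - 0) < s \<longrightarrow> norm ((\<phi> (t + h) - \<phi> t) / h - \<rho> t) < r"
      proof (intro exI[of _ d] conjI allI impI)
        fix h :: real assume h: "h \<noteq> 0 \<and> norm (h - 0) < d"
        show "norm ((\<phi> (t + h) - \<phi> t) / h - \<rho> t) < r"
        proof (cases "h > 0")
          case True
          have 1: "\<rho> t \<le> sl t (t + h)" using True by (rule i)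
          have "sl (t + h - h) (t + h) \<le> \<rho> (t + h)" using True by (intro ii)
          then have 2: "sl t (t + h) \<le> \<rho> (t + h)" by simp
          have 3: "\<bar>\<rho> (t + h) - \<rho> t\<bar> < r" using h by (intro d) auto
          have "(\<phi> (t + h) - \<phi> t) / h = sl t (t + h)" by (simp add: sl_def)
          then show ?thesis using 1 2 3 by simp
        next
          case False
          with h have hn: "-h > 0" by simp
          have "\<rho> (t + h) \<le> sl (t + h) (t + h + - h)" using hn by (rule i)
          then have 1: "\<rho> (t + h) \<le> sl (t + h) t" by simp
          have "sl (t - - h) t \<le> \<rho> t" using hn by (rule ii)
          then have 2: "sl (t + h) t \<le> \<rho> t" by simp
          have 3: "\<bar>\<rho> (t + h) - \<rho> t\<bar> < r" using h by (intro d) auto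
          have "(\<phi> (t + h) - \<phi> t) / h = sl (t + h) t"
            unfolding sl_def by (metis minus_diff_eq minus_divide_divide add_diff_cancel_left' diff_add_cancel)
          then show ?thesis using 1 2 3 by simp
        qed
      qed (use d in auto)
    qed
  qed
  ultimately show ?thesis using that by blast
qed



lemma orth_char:
  fixes x y :: "'a::real_normed_vector"
  assumes d: "((\<lambda>a. norm (x + a *\<^sub>R y)) has_real_derivative d) (at t)"
  shows "bj_orth (x + t *\<^sub>R y) (x - \<beta> *\<^sub>R y) \<longleftrightarrow> norm (x + t *\<^sub>R y) - (t + \<beta>) * d = 0"
proof -
  define \<phi> where "\<phi> a = norm (x + a *\<^sub>R y)" for a
  define u where "u = x + t *\<^sub>R y"
  define v where "v = x - \<beta> *\<^sub>R y"
  define s where "s = t + \<beta>"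
  define G where "G g = norm (u + g *\<^sub>R v)" for g :: real
  define w where "w g = t - g * s / (1 + g)" for g :: real
  define H where "H g = (1 + g) * \<phi> (w g)" for g :: real
  have dphi: "(\<phi> has_real_derivative d) (at (w 0))"
    using d by (simp add: w_def \<phi>_def[abs_def])
  have dw: "(w has_real_derivative (- s)) (at 0)"
    unfolding w_def[abs_def] by (auto intro!: derivative_eq_intros)
  have dcomp: "((\<lambda>g. \<phi> (w g)) has_real_derivative d * (- s)) (at 0)"
    using DERIV_chain2[OF dphi dw] .
  have dH: "(H has_real_derivative (\<phi> t - s * d)) (at 0)"
  proof -
    have "(H has_real_derivative (1 * \<phi> (w 0) + (1 + 0) * (d * (- s)))) (at 0)"
      unfolding H_def[abs_def] by (auto intro!: derivative_eq_intros dcomp)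
    moreover have "1 * \<phi> (w 0) + (1 + 0) * (d * (- s)) = \<phi> t - s * d"
      by (simp add: w_def)
    ultimately show ?thesis by metis
  qed
  have HG: "H g = G g" if "g \<in> ball 0 1" for g
  proof -
    from that have g1: "1 + g > 0" by (auto simp: dist_real_def)
    have "u + g *\<^sub>R v = (1 + g) *\<^sub>R (x + w g *\<^sub>R y)"
    proof -
      have "(1 + g) * w g = t - g * \<beta>"
        using g1 by (simp add: w_def s_def field_simps)
      then have "(1 + g) *\<^sub>R (x + w g *\<^sub>R y) = (1 + g) *\<^sub>R x + (t - g * \<beta>) *\<^sub>R y"
        by (simp add: scaleR_add_right)
      also have "\<dots> = u + g *\<^sub>R v"
        by (simp add: u_def v_def algebra_simps)
      finally show ?thesis by simp
    qed
    then show ?thesis using g1 by (simp add: G_def H_def \<phi>_def)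
  qed
  have dG: "(G has_real_derivative (\<phi> t - s * d)) (at 0)"
    by (rule has_field_derivative_transform_within_open[OF dH, of "ball 0 1"]) (use HG in auto)
  have G0: "G 0 = norm u" by (simp add: G_def)
  have "bj_orth u v \<longleftrightarrow> (\<forall>g. G 0 \<le> G g)"
    by (simp add: bj_orth_def G_def)
  also have "\<dots> \<longleftrightarrow> \<phi> t - s * d = 0"
  proof
    assume "\<forall>g. G 0 \<le> G g"
    then show "\<phi> t - s * d = 0"
      by (intro DERIV_local_min[OF dG, of 1]) auto
  next
    assume z: "\<phi> t - s * d = 0"
    show "\<forall>g. G 0 \<le> G g"
    proof
      fix g
      have "(\<phi> t - s * d) * (g - 0) \<le> G g - G 0"
        using convex_on_imp_above_tangent[OF convex_norm_line[of u v], of 0 g "\<phi> t - s * d"] dG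
        unfolding G_def by auto
      then show "G 0 \<le> G g" using z by simp
    qed
  qed
  finally show ?thesis by (simp add: u_def v_def s_def \<phi>_def mult.commute)
qed



lemma ln_lip:
  fixes u v c :: real
  assumes "c > 0" "u \<ge> c" "v \<ge> c"
  shows "\<bar>ln u - ln v\<bar> \<le> \<bar>u - v\<bar> / c"
proof -
  have A: "ln p - ln q \<le> \<bar>p - q\<bar> / c" if "p \<ge> c" "q \<ge> c" for p q
  proof -
    have pq: "p > 0" "q > 0" using that assms by auto
    have "ln p - ln q = ln (p / q)" using pq by (simp add: ln_div)
    also have "\<dots> \<le> p / q - 1" using pq by (intro ln_le_minus_one) auto
    also have "\<dots> = (p - q) / q" using pq by (simp add: field_simps)
    also have "\<dots> \<le> \<bar>p - q\<bar> / q" using pq by (intro divide_right_mono) auto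
    also have "\<dots> \<le> \<bar>p - q\<bar> / c" using pq that assms by (intro divide_left_mono) auto
    finally show ?thesis .
  qed
  from A[of u v] A[of v u] assms show ?thesis by (auto simp: abs_minus_commute)
qed

theorem lemma4:
  fixes x y :: "'a::banach" and m M :: real
  assumes indep: "\<forall>a b::real. a *\<^sub>R x + b *\<^sub>R y = 0 \<longrightarrow> a = 0 \<and> b = 0"
    and mM: "{\<alpha>::real. bj_orth (x + \<alpha> *\<^sub>R y) y} = {m..M}"
  shows "(\<forall>\<alpha>>M. set_integrable lborel {M..\<alpha>} (\<lambda>t. 1 / (t + fBJ x y t)) \<and>
            norm (x + \<alpha> *\<^sub>R y) =
              norm (x + M *\<^sub>R y) * exp (LINT t:{M..\<alpha>}|lborel. 1 / (t + fBJ x y t)))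
    \<and> (\<forall>\<alpha><m. set_integrable lborel {\<alpha>..m} (\<lambda>t. 1 / (t + fBJ x y t)) \<and>
            norm (x + \<alpha> *\<^sub>R y) =
              norm (x + m *\<^sub>R y) * exp (- (LINT t:{\<alpha>..m}|lborel. 1 / (t + fBJ x y t))))"
proof -
  define \<phi> where "\<phi> a = norm (x + a *\<^sub>R y)" for a
  define \<psi> where "\<psi> a = ln (\<phi> a)" for a
  define g where "g t = 1 / (t + fBJ x y t)" for t
  have pos: "\<phi> t > 0" for t
  proof -
    have "x + t *\<^sub>R y \<noteq> 0" using indep[rule_format, of 1 t] by auto
    then show ?thesis by (simp add: \<phi>_def)
  qed
  have contphi: "continuous_on UNIV \<phi>"
    unfolding \<phi>_def[abs_def] by (intro continuous_intros)
  have contpsi: "continuous_on UNIV \<psi>"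
    unfolding \<psi>_def[abs_def] using pos by (intro continuous_intros contphi) (auto simp: less_le)
  have cvx: "convex_on UNIV \<phi>"
    unfolding \<phi>_def[abs_def] by (rule convex_norm_line)
  obtain N \<rho> where N: "countable N" and dphi: "\<And>t. t \<notin> N \<Longrightarrow> (\<phi> has_real_derivative \<rho> t) (at t)"
    using convex_diff_ae[OF cvx] by blast
  have rho_nz: "\<rho> t \<noteq> 0" if "t \<notin> N" "t \<notin> {m..M}" for t
  proof
    assume r0: "\<rho> t = 0"
    have "bj_orth (x + t *\<^sub>R y) y"
      unfolding bj_orth_def
    proof
      fix b :: real
      have "\<rho> t * ((t + b) - t) \<le> \<phi> (t + b) - \<phi> t"
        using convex_on_imp_above_tangent[OF cvx, of t "t + b" "\<rho> t"] dphi[OF that(1)] by auto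
      then have "\<phi> t \<le> \<phi> (t + b)" using r0 by simp
      moreover have "x + t *\<^sub>R y + b *\<^sub>R y = x + (t + b) *\<^sub>R y" by (simp add: algebra_simps)
      ultimately show "norm (x + t *\<^sub>R y) \<le> norm (x + t *\<^sub>R y + b *\<^sub>R y)"
        unfolding \<phi>_def by metis
    qed
    then have "t \<in> {m..M}" using mM by blast
    with that show False by simp
  qed
  have g_eq: "g t = \<rho> t / \<phi> t" if "t \<notin> N" "t \<notin> {m..M}" for t
  proof -
    have r: "\<rho> t \<noteq> 0" using rho_nz[OF that] .
    have d': "((\<lambda>a. norm (x + a *\<^sub>R y)) has_real_derivative \<rho> t) (at t)"
      using dphi[OF that(1)] by (simp add: \<phi>_def[abs_def])
    have "fBJ x y t = \<phi> t / \<rho> t - t"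
      unfolding fBJ_def
    proof (rule the_equality)
      show "bj_orth (x + t *\<^sub>R y) (x - (\<phi> t / \<rho> t - t) *\<^sub>R y)"
        using orth_char[OF d'] r by (simp add: \<phi>_def[symmetric])
    next
      fix b assume "bj_orth (x + t *\<^sub>R y) (x - b *\<^sub>R y)"
      then have "\<phi> t - (t + b) * \<rho> t = 0"
        using orth_char[OF d'] by (simp add: \<phi>_def[symmetric])
      then show "b = \<phi> t / \<rho> t - t" using r by (simp add: field_simps)
    qed
    then show ?thesis using pos[of t] r by (simp add: g_def)
  qed
  have dpsi: "(\<psi> has_real_derivative g t) (at t)" if "t \<notin> N" "t \<notin> {m..M}" for t
  proof -
    have "(\<psi> has_real_derivative inverse (\<phi> t) * \<rho> t) (at t)"
      unfolding \<psi>_def[abs_def] using DERIV_chain2[OF DERIV_ln[OF pos[of t]] dphi[OF that(1)]] .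
    then show ?thesis using g_eq[OF that] by (simp add: divide_inverse mult.commute)
  qed
  have lip: "\<exists>L. \<forall>s\<in>{a..b}. \<forall>t\<in>{a..b}. \<bar>\<psi> s - \<psi> t\<bar> \<le> L * \<bar>s - t\<bar>" if ab: "a \<le> b" for a b
  proof -
    obtain z where z: "z \<in> {a..b}" "\<And>t. t \<in> {a..b} \<Longrightarrow> \<phi> z \<le> \<phi> t"
    proof -
      have "\<exists>z\<in>{a..b}. \<forall>t\<in>{a..b}. \<phi> z \<le> \<phi> t"
        by (rule continuous_attains_inf) (use ab continuous_on_subset[OF contphi] in auto)
      then show ?thesis using that by blast
    qed
    define c where "c = \<phi> z"
    have c: "c > 0" using pos by (simp add: c_def)
    have "\<bar>\<psi> s - \<psi> t\<bar> \<le> (norm y / c) * \<bar>s - t\<bar>" if "s \<in> {a..b}" "t \<in> {a..b}" for s t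
    proof -
      have "\<bar>\<psi> s - \<psi> t\<bar> \<le> \<bar>\<phi> s - \<phi> t\<bar> / c"
        unfolding \<psi>_def using ln_lip[OF c] z(2) that by (simp add: c_def)
      also have "\<bar>\<phi> s - \<phi> t\<bar> \<le> norm ((x + s *\<^sub>R y) - (x + t *\<^sub>R y))"
        unfolding \<phi>_def by (rule norm_triangle_ineq3)
      also have "norm ((x + s *\<^sub>R y) - (x + t *\<^sub>R y)) = \<bar>s - t\<bar> * norm y"
        by (simp add: scaleR_diff_left[symmetric])
      finally show ?thesis using c by (simp add: divide_right_mono field_simps)
    qed
    then show ?thesis by blast
  qed
  have part1: "set_integrable lborel {M..\<alpha>} g \<and>
      \<phi> \<alpha> = \<phi> M * exp (LINT t:{M..\<alpha>}|lborel. g t)" if al: "\<alpha> > M" for \<alpha>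
  proof -
    obtain L where L: "\<forall>s\<in>{M..\<alpha>+1}. \<forall>t\<in>{M..\<alpha>+1}. \<bar>\<psi> s - \<psi> t\<bar> \<le> L * \<bar>s - t\<bar>"
      using lip[of M "\<alpha> + 1"] al by auto
    have "set_integrable lborel {M..\<alpha>} g \<and> (LINT t:{M..\<alpha>}|lborel. g t) = \<psi> \<alpha> - \<psi> M"
      using al L by (intro ftc_ae[OF _ N contpsi, of _ _ L] dpsi) auto
    moreover have "\<phi> \<alpha> = \<phi> M * exp (\<psi> \<alpha> - \<psi> M)"
      using pos[of \<alpha>] pos[of M] by (simp add: \<psi>_def exp_diff)
    ultimately show ?thesis by simp
  qed
  have part2: "set_integrable lborel {\<alpha>..m} g \<and>
      \<phi> \<alpha> = \<phi> m * exp (- (LINT t:{\<alpha>..m}|lborel. g t))" if al: "\<alpha> < m" for \<alpha>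
  proof -
    obtain L where L: "\<forall>s\<in>{\<alpha>..m+1}. \<forall>t\<in>{\<alpha>..m+1}. \<bar>\<psi> s - \<psi> t\<bar> \<le> L * \<bar>s - t\<bar>"
      using lip[of \<alpha> "m + 1"] al by auto
    have "set_integrable lborel {\<alpha>..m} g \<and> (LINT t:{\<alpha>..m}|lborel. g t) = \<psi> m - \<psi> \<alpha>"
      using al L by (intro ftc_ae[OF _ N contpsi, of _ _ L] dpsi) auto
    moreover have "\<phi> \<alpha> = \<phi> m * exp (- (\<psi> m - \<psi> \<alpha>))"
      using pos[of \<alpha>] pos[of m] by (simp add: \<psi>_def exp_diff exp_minus field_simps)
    ultimately show ?thesis by simp
  qed
  show ?thesis
    using part1 part2 unfolding g_def[abs_def] \<phi>_def by blast
qed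

end
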